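(* Let $k\ge 1$ be an integer. In the power series expansions (in $y,z,q$) of $$\frac{1}{(yq;q)_\infty}\sum_{n\ge 0}\frac{(-1)^n y^n q^{n(n+1)/2} (z;q^k)_n}{(q;q)_n}$$ and of $$(-yq;q)_\infty \sum_{n\ge 0}\frac{(-1)^n y^n q^n (z;q^k)_n}{(q;q)_n},$$ the coefficient of $y^\ell z^m q^n$ is nonnegative for all $\ell,m,n$.
   Context: The $q$-Pochhammer symbol is $(A;q)_n=\prod_{j=0}^{n-1}(1-Aq^j)$ for $n\in\mathbb{N}\cup\{\infty\}$. *)

theory Defs
  imports "HOL-Computational_Algebra.Formal_Power_Series" "HOL-Computational_Algebra.Polynomial"
begin

text \<open>Power series in y, z, q are modelled as formal power series in q
(variable fps_X) whose coefficients are polynomials in y with coefficients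
polynomials in z, over int.  Convergence of infinite sums/products is in the
q-adic (fps) metric topology.\<close>

type_synonym ser = "int poly poly fps"

definition qpoch :: "'a::comm_ring_1 \<Rightarrow> 'a \<Rightarrow> nat \<Rightarrow> 'a" where
  "qpoch A Q n = (\<Prod>j<n. (1 - A * Q ^ j))"

definition qpoch_inf :: "ser \<Rightarrow> ser \<Rightarrow> ser" where
  "qpoch_inf A Q = lim (\<lambda>N. qpoch A Q N)"

definition vq :: ser where "vq = fps_X"
definition vy :: ser where "vy = fps_const [:0, 1:]"
definition vz :: ser where "vz = fps_const [:[:0, 1:]:]"

definition finv :: "ser \<Rightarrow> ser" where
  "finv f = fps_right_inverse f 1"

definition coeff_yzq :: "ser \<Rightarrow> nat \<Rightarrow> nat \<Rightarrow> nat \<Rightarrow> int" where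
  "coeff_yzq F l m n = coeff (coeff (fps_nth F n) l) m"

definition series1 :: "nat \<Rightarrow> ser" where
  "series1 k = finv (qpoch_inf (vy * vq) vq) *
     (\<Sum>n. (-1) ^ n * vy ^ n * vq ^ (n * (n + 1) div 2) * qpoch vz (vq ^ k) n
            * finv (qpoch vq vq n))"

definition series2 :: "nat \<Rightarrow> ser" where
  "series2 k = qpoch_inf (- (vy * vq)) vq *
     (\<Sum>n. (-1) ^ n * vy ^ n * vq ^ n * qpoch vz (vq ^ k) n * finv (qpoch vq vq n))"

end

theory Submission
  imports Defs
begin

definition vanish :: "nat \<Rightarrow> ser \<Rightarrow> bool" where
  "vanish e F \<longleftrightarrow> (\<forall>j<e. fps_nth F j = 0)"

lemma vanish_mult_left: "vanish e F \<Longrightarrow> vanish e (G * F)"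
  unfolding vanish_def by (auto simp: fps_mult_nth intro!: sum.neutral)

lemma vanish_mult_right: "vanish e F \<Longrightarrow> vanish e (F * G)"
  using vanish_mult_left[of e F G] by (simp add: mult.commute)

lemma vanish_X_power: "vanish e (fps_X ^ e')" if "e \<le> e'"
  using that unfolding vanish_def by (auto simp: fps_X_power_nth)

lemma vanish_diff: "vanish e F \<Longrightarrow> vanish e G \<Longrightarrow> vanish e (F - G)"
  unfolding vanish_def by auto

definition ssum :: "(nat \<Rightarrow> ser) \<Rightarrow> ser" where
  "ssum a = Abs_fps (\<lambda>j. \<Sum>n\<le>j. fps_nth (a n) j)"

lemma ssum_nth: "fps_nth (ssum a) j = (\<Sum>n\<le>j. fps_nth (a n) j)"
  by (simp add: ssum_def)

lemma sums_ssum: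
  assumes "\<And>n. vanish n (a n)"
  shows "a sums ssum a"
  unfolding sums_def
proof (rule tendsto_fpsI)
  fix j
  show "\<forall>\<^sub>F N in sequentially. fps_nth (\<Sum>n<N. a n) j = fps_nth (ssum a) j"
    unfolding eventually_sequentially
  proof (intro exI allI impI)
    fix N assume N: "Suc j \<le> N"
    have "fps_nth (\<Sum>n<N. a n) j = (\<Sum>n<N. fps_nth (a n) j)" by (simp add: fps_sum_nth)
    also have "\<dots> = (\<Sum>n\<le>j. fps_nth (a n) j)"
    proof (rule sum.mono_neutral_right)
      show "{..j} \<subseteq> {..<N}" using N by auto
      show "\<forall>i\<in>{..<N} - {..j}. fps_nth (a i) j = 0"
        using assms unfolding vanish_def by auto
    qed auto
    finally show "fps_nth (\<Sum>n<N. a n) j = fps_nth (ssum a) j" by (simp add: ssum_nth)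
  qed
qed

lemma suminf_ssum: "(\<And>n. vanish n (a n)) \<Longrightarrow> suminf a = ssum a"
  using sums_ssum sums_unique by metis

lemma ssum_diff: "ssum (\<lambda>n. a n - b n) = ssum a - ssum b"
  by (rule fps_ext) (simp add: ssum_nth sum_subtractf)

lemma tendsto_fps_mult:
  fixes f g :: "nat \<Rightarrow> ser"
  assumes "f \<longlonglongrightarrow> A" "g \<longlonglongrightarrow> B"
  shows "(\<lambda>n. f n * g n) \<longlonglongrightarrow> A * B"
proof (rule tendsto_fpsI)
  fix j
  have "\<forall>i\<in>{0..j}. \<forall>\<^sub>F n in sequentially. fps_nth (f n) i = fps_nth A i \<and> fps_nth (g n) i = fps_nth B i"
    using assms by (auto simp: tendsto_fps_iff intro: eventually_conj)
  hence "\<forall>\<^sub>F n in sequentially. \<forall>i\<in>{0..j}. fps_nth (f n) i = fps_nth A i \<and> fps_nth (g n) i = fps_nth B i"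
    by (subst eventually_ball_finite_distrib) auto
  thus "\<forall>\<^sub>F n in sequentially. fps_nth (f n * g n) j = fps_nth (A * B) j"
    by eventually_elim (auto simp: fps_mult_nth intro!: sum.cong)
qed

lemma sums_fps_mult_left:
  fixes a :: "nat \<Rightarrow> ser"
  assumes "a sums L" shows "(\<lambda>n. c * a n) sums (c * L)"
  using tendsto_fps_mult[OF tendsto_const assms[unfolded sums_def], of c]
  unfolding sums_def by (simp add: sum_distrib_left)

lemma sums_shift0:
  fixes a :: "nat \<Rightarrow> ser"
  assumes "a 0 = 0" "(\<lambda>n. a (Suc n)) sums L" shows "a sums L"
proof -
  have eq: "(\<Sum>n<Suc N. a n) = (\<Sum>n<N. a (Suc n))" for N
    by (subst sum.lessThan_Suc_shift) (simp add: assms(1))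
  have "(\<lambda>N. \<Sum>n<Suc N. a n) \<longlonglongrightarrow> L"
    using assms(2) unfolding sums_def eq .
  thus ?thesis unfolding sums_def by (rule LIMSEQ_imp_Suc)
qed

lemma ssum_mult_left:
  assumes "\<And>n. vanish n (a n)"
  shows "ssum (\<lambda>n. c * a n) = c * ssum a"
proof -
  have "(\<lambda>n. c * a n) sums ssum (\<lambda>n. c * a n)"
    using assms by (intro sums_ssum vanish_mult_left)
  moreover have "(\<lambda>n. c * a n) sums (c * ssum a)"
    using assms by (intro sums_fps_mult_left sums_ssum)
  ultimately show ?thesis by (rule sums_unique2)
qed

lemma finv_mult: "fps_nth f 0 = 1 \<Longrightarrow> f * finv f = 1"
  unfolding finv_def by (rule fps_right_inverse) simp

lemma finv_unique: "fps_nth f 0 = 1 \<Longrightarrow> f * g = 1 \<Longrightarrow> finv f = g"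
proof -
  assume f0: "fps_nth f 0 = 1" and fg: "f * g = 1"
  have "f \<noteq> 0" using f0 by auto
  moreover have "f * finv f = f * g" using finv_mult[OF f0] fg by simp
  ultimately show ?thesis by simp
qed

definition geom :: "int poly poly \<Rightarrow> nat \<Rightarrow> ser" where
  "geom c e = Abs_fps (\<lambda>n. if e dvd n then c ^ (n div e) else 0)"

lemma geom_inv:
  assumes e: "0 < e"
  shows "(1 - fps_const c * fps_X ^ e) * geom c e = 1"
proof (rule fps_ext)
  fix n
  have "fps_nth ((1 - fps_const c * fps_X ^ e) * geom c e) n
      = fps_nth (geom c e) n - c * fps_nth (fps_X ^ e * geom c e) n"
    by (simp add: algebra_simps mult.assoc)
  also have "\<dots> = fps_nth 1 n"
  proof (cases "n < e")
    case True
    then show ?thesis using e by (cases "n = 0") (auto simp: geom_def fps_X_power_mult_nth dest: dvd_imp_le)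
  next
    case False
    then obtain d where d: "n = e + d" by (metis le_Suc_ex not_less)
    have "e dvd n \<longleftrightarrow> e dvd d" using d by auto
    moreover have "e dvd d \<Longrightarrow> n div e = Suc (d div e)" using d e by auto
    ultimately show ?thesis using d e by (auto simp: geom_def fps_X_power_mult_nth)
  qed
  finally show "fps_nth ((1 - fps_const c * fps_X ^ e) * geom c e) n = fps_nth 1 n" .
qed

definition pnn :: "int poly \<Rightarrow> bool" where "pnn p \<longleftrightarrow> (\<forall>i. 0 \<le> coeff p i)"
definition pnn2 :: "int poly poly \<Rightarrow> bool" where "pnn2 p \<longleftrightarrow> (\<forall>i. pnn (coeff p i))"
definition pos :: "ser \<Rightarrow> bool" where "pos F \<longleftrightarrow> (\<forall>n. pnn2 (fps_nth F n))"

lemma pnn_sum: "(\<And>i. i \<in> A \<Longrightarrow> pnn (f i)) \<Longrightarrow> pnn (sum f A)"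
  unfolding pnn_def by (auto simp: coeff_sum intro: sum_nonneg)
lemma pnn_mult: "pnn p \<Longrightarrow> pnn q \<Longrightarrow> pnn (p * q)"
  unfolding pnn_def by (auto simp: coeff_mult intro!: sum_nonneg mult_nonneg_nonneg)
lemma pnn_add: "pnn p \<Longrightarrow> pnn q \<Longrightarrow> pnn (p + q)"
  unfolding pnn_def by auto
lemma pnn_0: "pnn 0" unfolding pnn_def by auto
lemma pnn_1: "pnn 1" unfolding pnn_def by (auto simp: coeff_1)

lemma pnn2_sum: "(\<And>i. i \<in> A \<Longrightarrow> pnn2 (f i)) \<Longrightarrow> pnn2 (sum f A)"
  unfolding pnn2_def by (auto simp: coeff_sum intro: pnn_sum)
lemma pnn2_mult: "pnn2 p \<Longrightarrow> pnn2 q \<Longrightarrow> pnn2 (p * q)"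
  unfolding pnn2_def by (auto simp: coeff_mult intro!: pnn_sum pnn_mult)
lemma pnn2_add: "pnn2 p \<Longrightarrow> pnn2 q \<Longrightarrow> pnn2 (p + q)"
  unfolding pnn2_def by (auto intro: pnn_add)
lemma pnn2_0: "pnn2 0" unfolding pnn2_def by (auto intro: pnn_0)
lemma pnn2_1: "pnn2 1" unfolding pnn2_def by (auto simp: coeff_1 intro: pnn_0 pnn_1)
lemma pnn2_power: "pnn2 p \<Longrightarrow> pnn2 (p ^ n)"
  by (induction n) (auto intro: pnn2_mult pnn2_1)
lemma pnn2_y: "pnn2 [:0, 1:]"
  unfolding pnn2_def by (auto simp: coeff_pCons pnn_0 pnn_1 split: nat.split)

lemma pos_add: "pos F \<Longrightarrow> pos G \<Longrightarrow> pos (F + G)"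
  unfolding pos_def by (auto intro: pnn2_add)
lemma pos_mult: "pos F \<Longrightarrow> pos G \<Longrightarrow> pos (F * G)"
  unfolding pos_def by (auto simp: fps_mult_nth intro!: pnn2_sum pnn2_mult)
lemma pos_0: "pos 0" unfolding pos_def by (auto intro: pnn2_0)
lemma pos_1: "pos 1" unfolding pos_def by (auto intro: pnn2_0 pnn2_1)
lemma pos_sum: "(\<And>i. i \<in> A \<Longrightarrow> pos (f i)) \<Longrightarrow> pos (sum f A)"
  unfolding pos_def by (auto simp: fps_sum_nth intro: pnn2_sum)
lemma pos_prod: "(\<And>i. i \<in> A \<Longrightarrow> pos (f i)) \<Longrightarrow> pos (prod f A)"
  by (induction A rule: infinite_finite_induct) (auto intro: pos_1 pos_mult)
lemma pos_power: "pos F \<Longrightarrow> pos (F ^ n)"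
  by (induction n) (auto intro: pos_mult pos_1)
lemma pos_X: "pos fps_X"
  unfolding pos_def by (auto simp: fps_X_nth intro: pnn2_0 pnn2_1)
lemma pos_const: "pnn2 c \<Longrightarrow> pos (fps_const c)"
  unfolding pos_def by (auto intro: pnn2_0)
lemma pos_geom: "pnn2 c \<Longrightarrow> pos (geom c e)"
  unfolding pos_def geom_def by (auto intro: pnn2_0 pnn2_power)

section \<open>z-free series and z-coefficients\<close>

definition zf :: "int poly poly \<Rightarrow> bool" where
  "zf p \<longleftrightarrow> (\<forall>l m. 0 < m \<longrightarrow> coeff (coeff p l) m = 0)"
definition zfree :: "ser \<Rightarrow> bool" where "zfree F \<longleftrightarrow> (\<forall>n. zf (fps_nth F n))"

lemma zf_const: "zf p \<Longrightarrow> coeff p a = [:coeff (coeff p a) 0:]"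
  unfolding zf_def by (intro poly_eqI) (auto simp: coeff_pCons split: nat.split)

lemma zf_coeff_mult: "zf p \<Longrightarrow> coeff (coeff p a * r) m = coeff (coeff p a) 0 * coeff r m"
proof -
  assume "zf p"
  then obtain c where c: "coeff p a = [:c:]" using zf_const by blast
  show ?thesis unfolding c by simp
qed

lemma zf_add: "zf p \<Longrightarrow> zf q \<Longrightarrow> zf (p + q)" unfolding zf_def by auto
lemma zf_diff: "zf p \<Longrightarrow> zf q \<Longrightarrow> zf (p - q)" unfolding zf_def by auto
lemma zf_uminus: "zf p \<Longrightarrow> zf (- p)" unfolding zf_def by auto
lemma zf_0: "zf 0" unfolding zf_def by auto
lemma zf_1: "zf 1" unfolding zf_def by (auto simp: coeff_1)
lemma zf_sum: "(\<And>i. i \<in> A \<Longrightarrow> zf (f i)) \<Longrightarrow> zf (sum f A)"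
  unfolding zf_def by (auto simp: coeff_sum intro!: sum.neutral)
lemma zf_mult: "zf p \<Longrightarrow> zf q \<Longrightarrow> zf (p * q)"
proof -
  assume p: "zf p" and q: "zf q"
  show "zf (p * q)" unfolding zf_def
  proof (intro allI impI)
    fix l m :: nat assume m: "0 < m"
    have "coeff (coeff (p * q) l) m = (\<Sum>a\<le>l. coeff (coeff p a * coeff q (l - a)) m)"
      by (simp only: coeff_mult[of p q] coeff_sum)
    also have "\<dots> = (\<Sum>a\<le>l. coeff (coeff p a) 0 * coeff (coeff q (l - a)) m)"
      by (rule sum.cong) (simp_all only: zf_coeff_mult[OF p])
    also have "\<dots> = 0" using q m unfolding zf_def by auto
    finally show "coeff (coeff (p * q) l) m = 0" .
  qed
qed
lemma zf_power: "zf p \<Longrightarrow> zf (p ^ n)"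
  by (induction n) (auto intro: zf_mult zf_1)
lemma zf_y: "zf [:0, 1:]"
  unfolding zf_def by (auto simp: coeff_pCons split: nat.split)

lemma zfree_add: "zfree F \<Longrightarrow> zfree G \<Longrightarrow> zfree (F + G)"
  unfolding zfree_def by (auto intro: zf_add)
lemma zfree_diff: "zfree F \<Longrightarrow> zfree G \<Longrightarrow> zfree (F - G)"
  unfolding zfree_def by (auto intro: zf_diff)
lemma zfree_uminus: "zfree F \<Longrightarrow> zfree (- F)"
  unfolding zfree_def by (auto intro: zf_uminus)
lemma zfree_mult: "zfree F \<Longrightarrow> zfree G \<Longrightarrow> zfree (F * G)"
  unfolding zfree_def by (auto simp: fps_mult_nth intro!: zf_sum zf_mult)
lemma zfree_0: "zfree 0" unfolding zfree_def by (auto intro: zf_0)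
lemma zfree_1: "zfree 1" unfolding zfree_def by (auto intro: zf_0 zf_1)
lemma zfree_X: "zfree fps_X" unfolding zfree_def by (auto simp: fps_X_nth intro: zf_0 zf_1)
lemma zfree_power: "zfree F \<Longrightarrow> zfree (F ^ n)"
  by (induction n) (auto intro: zfree_mult zfree_1)
lemma zfree_prod: "(\<And>i. i \<in> A \<Longrightarrow> zfree (f i)) \<Longrightarrow> zfree (prod f A)"
  by (induction A rule: infinite_finite_induct) (auto intro: zfree_1 zfree_mult)
lemma zfree_const: "zf c \<Longrightarrow> zfree (fps_const c)"
  unfolding zfree_def by (auto intro: zf_0)
lemma zfree_geom: "zf c \<Longrightarrow> zfree (geom c e)"
  unfolding zfree_def geom_def by (auto intro: zf_0 zf_power)
lemma zfree_ssum: "(\<And>n. zfree (a n)) \<Longrightarrow> zfree (ssum a)"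
  unfolding zfree_def by (auto simp: ssum_nth intro!: zf_sum)
lemma zfree_vy: "zfree vy" unfolding vy_def by (intro zfree_const zf_y)
lemma zfree_vq: "zfree vq" unfolding vq_def by (rule zfree_X)

definition ZP :: "nat \<Rightarrow> int poly poly \<Rightarrow> int poly poly" where
  "ZP m p = map_poly (\<lambda>c. [:coeff c m:]) p"

lemma coeff_ZP: "coeff (ZP m p) l = [:coeff (coeff p l) m:]"
  by (simp add: ZP_def coeff_map_poly)

lemma ZP_add: "ZP m (p + q) = ZP m p + ZP m q"
  by (rule poly_eqI) (simp add: coeff_ZP)
lemma ZP_diff: "ZP m (p - q) = ZP m p - ZP m q"
  by (rule poly_eqI) (simp add: coeff_ZP)
lemma ZP_0: "ZP m 0 = 0"
  by (rule poly_eqI) (simp add: coeff_ZP)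
lemma ZP_sum: "ZP m (sum f A) = (\<Sum>i\<in>A. ZP m (f i))"
  by (induction A rule: infinite_finite_induct) (simp_all add: ZP_add ZP_0)
lemma sum_pCons0: "(\<Sum>i\<in>A. [:f i:]) = [:\<Sum>i\<in>A. f i:]"
  by (induction A rule: infinite_finite_induct) simp_all
lemma ZP_mult: "zf p \<Longrightarrow> ZP m (p * q) = p * ZP m q"
proof (rule poly_eqI)
  fix l assume p: "zf p"
  have "coeff (coeff (p * q) l) m = (\<Sum>a\<le>l. coeff (coeff p a * coeff q (l - a)) m)"
    by (simp only: coeff_mult[of p q] coeff_sum)
  also have "\<dots> = (\<Sum>a\<le>l. coeff (coeff p a) 0 * coeff (coeff q (l - a)) m)"
    by (rule sum.cong) (simp_all only: zf_coeff_mult[OF p])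
  finally have "coeff (ZP m (p * q)) l = [:\<Sum>a\<le>l. coeff (coeff p a) 0 * coeff (coeff q (l - a)) m:]"
    by (simp add: coeff_ZP)
  also have "\<dots> = (\<Sum>a\<le>l. [:coeff (coeff p a) 0:] * [:coeff (coeff q (l - a)) m:])"
    by (simp add: sum_pCons0 mult.commute)
  also have "\<dots> = (\<Sum>a\<le>l. coeff p a * coeff (ZP m q) (l - a))"
    by (simp add: coeff_ZP zf_const[OF p, symmetric])
  also have "\<dots> = coeff (p * ZP m q) l" by (simp add: coeff_mult)
  finally show "coeff (ZP m (p * q)) l = coeff (p * ZP m q) l" .
qed
lemma zf_ZP: "zf (ZP m p)"
  unfolding zf_def by (simp add: coeff_ZP coeff_pCons split: nat.split)

definition zc :: "nat \<Rightarrow> ser \<Rightarrow> ser" where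
  "zc m F = Abs_fps (\<lambda>n. ZP m (fps_nth F n))"

lemma zc_nth [simp]: "fps_nth (zc m F) n = ZP m (fps_nth F n)"
  by (simp add: zc_def)
lemma zc_add: "zc m (F + G) = zc m F + zc m G"
  by (rule fps_ext) (simp add: ZP_add)
lemma zc_diff: "zc m (F - G) = zc m F - zc m G"
  by (rule fps_ext) (simp add: ZP_diff)
lemma zc_mult: "zfree F \<Longrightarrow> zc m (F * G) = F * zc m G"
  unfolding zfree_def by (intro fps_ext) (simp add: fps_mult_nth ZP_sum ZP_mult)
lemma zfree_zc: "zfree (zc m F)"
  unfolding zfree_def by (simp add: zf_ZP)
lemma zc_ssum: "zc m (ssum a) = ssum (\<lambda>n. zc m (a n))"
  by (rule fps_ext) (simp add: ssum_nth ZP_sum)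
lemma zc_1: "zc m 1 = (if m = 0 then 1 else 0)"
  by (rule fps_ext, rule poly_eqI) (auto simp: coeff_ZP coeff_1)
lemma zc_vz_Suc: "zc (Suc m) (vz * F) = zc m F"
  by (rule fps_ext, rule poly_eqI) (simp add: vz_def coeff_ZP)
lemma zc_vz_0: "zc 0 (vz * F) = 0"
  by (rule fps_ext, rule poly_eqI) (simp add: vz_def coeff_ZP)
lemma vanish_zc: "vanish e F \<Longrightarrow> vanish e (zc m F)"
  unfolding vanish_def by (simp add: ZP_0)

section \<open>The z-coefficients of (z;Q)_n\<close>

definition tri :: "nat \<Rightarrow> nat" where "tri m = (\<Sum>i<m. i)"
lemma tri_Suc: "tri (Suc m) = tri m + m" by (simp add: tri_def)
lemma tri_0: "tri 0 = 0" by (simp add: tri_def)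

lemma qpoch_Suc: "qpoch A Q (Suc n) = qpoch A Q n * (1 - A * Q ^ n)"
  by (simp add: qpoch_def)
lemma qpoch_0: "qpoch A Q 0 = 1"
  by (simp add: qpoch_def)

definition cc :: "ser \<Rightarrow> nat \<Rightarrow> nat \<Rightarrow> ser" where "cc Q n m = zc m (qpoch vz Q n)"

lemma cc_0: "cc Q 0 m = (if m = 0 then 1 else 0)"
  by (simp add: cc_def qpoch_0 zc_1)

lemma cc_Suc_0: "zfree Q \<Longrightarrow> cc Q (Suc n) 0 = cc Q n 0"
proof -
  assume Q: "zfree Q"
  have "qpoch vz Q (Suc n) = qpoch vz Q n - vz * (Q ^ n * qpoch vz Q n)"
    by (simp add: qpoch_Suc algebra_simps)
  thus ?thesis by (simp add: cc_def zc_diff zc_vz_0)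
qed

lemma cc_Suc_Suc: "zfree Q \<Longrightarrow> cc Q (Suc n) (Suc m) = cc Q n (Suc m) - Q ^ n * cc Q n m"
proof -
  assume Q: "zfree Q"
  have "qpoch vz Q (Suc n) = qpoch vz Q n - vz * (Q ^ n * qpoch vz Q n)"
    by (simp add: qpoch_Suc algebra_simps)
  thus ?thesis by (simp add: cc_def zc_diff zc_vz_Suc zc_mult zfree_power Q)
qed

definition pp :: "ser \<Rightarrow> nat \<Rightarrow> nat \<Rightarrow> ser" where "pp Q n m = (\<Prod>s<m. Q ^ (n - s) - 1)"

lemma pp_0: "pp Q n 0 = 1" by (simp add: pp_def)
lemma pp_Suc: "pp Q n (Suc m) = pp Q n m * (Q ^ (n - m) - 1)"
  by (simp add: pp_def)
lemma pp_Suc_Suc: "pp Q (Suc n) (Suc m) = (Q ^ Suc n - 1) * pp Q n m"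
  unfolding pp_def by (subst prod.lessThan_Suc_shift) simp
lemma pp_zero: "n < m \<Longrightarrow> pp Q n m = 0"
  unfolding pp_def by (rule prod_zero) (auto intro!: bexI[of _ n])

lemma cc_pp:
  assumes Q: "zfree Q"
  shows "qpoch Q Q m * cc Q n m = Q ^ tri m * pp Q n m"
proof (induction n arbitrary: m)
  case 0
  show ?case
  proof (cases m)
    case 0
    then show ?thesis by (simp add: cc_0 qpoch_0 tri_0 pp_0)
  next
    case (Suc m')
    then show ?thesis by (simp add: cc_0 pp_zero)
  qed
next
  case (Suc n)
  note IH = Suc.IH
  show ?case
  proof (cases m)
    case 0
    then show ?thesis using IH[of 0] by (simp add: cc_Suc_0[OF Q] qpoch_0 pp_0)
  next
    case m: (Suc m')
    have ih1: "qpoch Q Q (Suc m') * cc Q n (Suc m') = Q ^ tri (Suc m') * pp Q n (Suc m')"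
      by (rule IH)
    have ih2: "qpoch Q Q m' * cc Q n m' = Q ^ tri m' * pp Q n m'"
      by (rule IH)
    have e1: "cc Q (Suc n) (Suc m') = cc Q n (Suc m') - Q ^ n * cc Q n m'"
      by (rule cc_Suc_Suc[OF Q])
    have e2: "qpoch Q Q (Suc m') = qpoch Q Q m' * (1 - Q * Q ^ m')"
      by (rule qpoch_Suc)
    have "qpoch Q Q (Suc m') * cc Q (Suc n) (Suc m')
        = qpoch Q Q (Suc m') * cc Q n (Suc m') - (1 - Q * Q ^ m') * Q ^ n * (qpoch Q Q m' * cc Q n m')"
    proof -
      have "qpoch Q Q (Suc m') * (Q ^ n * cc Q n m') = (1 - Q * Q ^ m') * Q ^ n * (qpoch Q Q m' * cc Q n m')"
        unfolding e2 by (simp only: mult_ac)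
      thus ?thesis unfolding e1 by (simp only: right_diff_distrib)
    qed
    also have "\<dots> = Q ^ (tri m' + m') * (pp Q n m' * (Q ^ (n - m') - 1))
                   - (1 - Q * Q ^ m') * Q ^ n * (Q ^ tri m' * pp Q n m')"
      by (simp only: ih1 ih2 tri_Suc pp_Suc)
    also have "\<dots> = Q ^ (tri m' + m') * ((Q ^ Suc n - 1) * pp Q n m')"
    proof (cases "n < m'")
      case True
      then show ?thesis by (simp add: pp_zero)
    next
      case False
      then obtain d where d: "n = m' + d" using le_Suc_ex[of m' n] by auto
      have e3: "Q ^ (n - m') = Q ^ d" using d by simp
      have e4: "Q ^ n = Q ^ m' * Q ^ d" using d by (simp add: power_add)
      have e5: "Q ^ Suc n = Q * (Q ^ m' * Q ^ d)" using d by (simp add: power_add)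
      have e6: "Q ^ (tri m' + m') = Q ^ tri m' * Q ^ m'" by (simp add: power_add)
      show ?thesis
        by (simp only: e3 e4 e5 e6) (simp add: algebra_simps)
    qed
    also have "\<dots> = Q ^ tri (Suc m') * pp Q (Suc n) (Suc m')"
      by (simp only: tri_Suc pp_Suc_Suc)
    finally show ?thesis using m by simp
  qed
qed

definition w :: "ser \<Rightarrow> nat \<Rightarrow> nat \<Rightarrow> nat \<Rightarrow> ser" where
  "w Q m i n = Q ^ (i * (n - m)) * pp Q n m"

lemma w_0: "w Q 0 i n = Q ^ (i * n)" by (simp add: w_def pp_0)
lemma w_i0: "w Q m 0 n = pp Q n m" by (simp add: w_def)

lemma w_rec: "w Q m (Suc i) n - w Q m i n = Q ^ i * w Q (Suc m) i n"
proof (cases "n \<le> m")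
  case True
  then consider "n < m" | "n = m" by linarith
  then show ?thesis
  proof cases
    case 1
    then show ?thesis by (simp add: w_def pp_zero)
  next
    case 2
    then show ?thesis by (simp add: w_def pp_Suc)
  qed
next
  case False
  then have "m < n" by simp
  then obtain d where d: "n = Suc (m + d)" using less_imp_Suc_add by blast
  have "n - m = Suc d" "n - Suc m = d" using d by auto
  have e1: "Q ^ (Suc i * (n - m)) = Q ^ i * Q ^ (i * d) * Q * Q ^ d"
    using d by (simp add: power_add algebra_simps)
  have e2: "Q ^ (i * (n - m)) = Q ^ i * Q ^ (i * d)"
    using d by (simp add: power_add algebra_simps)
  have e3: "Q ^ (i * (n - Suc m)) = Q ^ (i * d)" "Q ^ (n - m) = Q * Q ^ d"
    using d by auto
  show ?thesis unfolding w_def pp_Suc e1 e2 e3 by (simp add: algebra_simps)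
qed

section \<open>Difference systems\<close>

definition sys :: "ser \<Rightarrow> (nat \<Rightarrow> nat \<Rightarrow> ser) \<Rightarrow> bool" where
  "sys Q a \<longleftrightarrow> (\<forall>m i. a m (Suc i) = a m i + Q ^ i * a (Suc m) i)"

fun qbin :: "ser \<Rightarrow> nat \<Rightarrow> nat \<Rightarrow> ser" where
  "qbin Q 0 j = (if j = 0 then 1 else 0)"
| "qbin Q (Suc m) j = Q ^ j * qbin Q m j + (if j = 0 then 0 else qbin Q m (j - 1))"

lemma qbin_zero: "m < j \<Longrightarrow> qbin Q m j = 0"
  by (induction m arbitrary: j) auto

lemma pos_qbin: "pos Q \<Longrightarrow> pos (qbin Q m j)"
  by (induction m arbitrary: j) (auto intro: pos_add pos_mult pos_power pos_0 pos_1)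

definition psys :: "ser \<Rightarrow> (nat \<Rightarrow> nat \<Rightarrow> ser) \<Rightarrow> (nat \<Rightarrow> nat \<Rightarrow> ser) \<Rightarrow> nat \<Rightarrow> nat \<Rightarrow> ser" where
  "psys Q a b m i = (\<Sum>j\<le>m. qbin Q m j * a j i * b (m - j) (i + j))"

lemma psys_0: "psys Q a b 0 i = a 0 i * b 0 i"
  by (simp add: psys_def)

lemma pos_psys:
  "pos Q \<Longrightarrow> (\<And>m i. pos (a m i)) \<Longrightarrow> (\<And>m i. pos (b m i)) \<Longrightarrow> pos (psys Q a b m i)"
  unfolding psys_def by (intro pos_sum pos_mult pos_qbin) auto

lemma sys_psys:
  assumes a: "sys Q a" and b: "sys Q b"
  shows "sys Q (psys Q a b)"
  unfolding sys_def
proof (intro allI)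
  fix m i
  define S1 where "S1 = (\<Sum>j\<le>m. Q ^ j * qbin Q m j * a j i * b (Suc (m - j)) (i + j))"
  define S2 where "S2 = (\<Sum>j\<le>m. qbin Q m j * a (Suc j) i * b (m - j) (Suc (i + j)))"
  have "psys Q a b m (Suc i) = (\<Sum>j\<le>m. qbin Q m j * a j i * b (m - j) (i + j)
          + Q ^ i * (Q ^ j * qbin Q m j * a j i * b (Suc (m - j)) (i + j))
          + Q ^ i * (qbin Q m j * a (Suc j) i * b (m - j) (Suc (i + j))))"
    unfolding psys_def
  proof (rule sum.cong)
    fix j assume "j \<in> {..m}"
    have ea: "a j (Suc i) = a j i + Q ^ i * a (Suc j) i" using a unfolding sys_def by blast
    have eb: "b (m - j) (Suc (i + j)) = b (m - j) (i + j) + Q ^ (i + j) * b (Suc (m - j)) (i + j)"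
      using b unfolding sys_def by blast
    have "qbin Q m j * a j (Suc i) * b (m - j) (Suc i + j)
        = qbin Q m j * a j i * b (m - j) (Suc (i + j)) + Q ^ i * (qbin Q m j * a (Suc j) i * b (m - j) (Suc (i + j)))"
      unfolding ea by (simp add: algebra_simps)
    also have "\<dots> = qbin Q m j * a j i * b (m - j) (i + j)
          + Q ^ i * (Q ^ j * qbin Q m j * a j i * b (Suc (m - j)) (i + j))
          + Q ^ i * (qbin Q m j * a (Suc j) i * b (m - j) (Suc (i + j)))"
      unfolding eb by (simp add: algebra_simps power_add)
    finally show "qbin Q m j * a j (Suc i) * b (m - j) (Suc i + j) = \<dots>" .
  qed simp
  also have "\<dots> = psys Q a b m i + Q ^ i * (S1 + S2)"
    unfolding psys_def S1_def S2_def by (simp add: sum.distrib sum_distrib_left algebra_simps)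
  also have "S1 + S2 = psys Q a b (Suc m) i"
  proof -
    have "psys Q a b (Suc m) i = (\<Sum>j\<le>Suc m. Q ^ j * qbin Q m j * a j i * b (Suc m - j) (i + j))
        + (\<Sum>j\<le>Suc m. (if j = 0 then 0 else qbin Q m (j - 1)) * a j i * b (Suc m - j) (i + j))"
      unfolding psys_def by (simp add: sum.distrib algebra_simps)
    also have "(\<Sum>j\<le>Suc m. Q ^ j * qbin Q m j * a j i * b (Suc m - j) (i + j)) = S1"
      unfolding S1_def by (simp add: qbin_zero Suc_diff_le)
    also have "(\<Sum>j\<le>Suc m. (if j = 0 then 0 else qbin Q m (j - 1)) * a j i * b (Suc m - j) (i + j)) = S2"
      unfolding S2_def by (subst sum.atMost_Suc_shift) simp
    finally show ?thesis by simp
  qed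
  finally show "psys Q a b m (Suc i) = psys Q a b m i + Q ^ i * psys Q a b (Suc m) i" .
qed

lemma sys_one: "sys Q (\<lambda>m i. if m = 0 then 1 else 0)"
  unfolding sys_def by simp

lemma sys_base1:
  assumes "\<And>n. \<beta> (Suc n) = \<beta> n + c * Q ^ n * \<beta> (Suc n)"
  shows "sys Q (\<lambda>m i. c ^ m * Q ^ tri m * \<beta> (i + m))"
  unfolding sys_def
proof (intro allI)
  fix m i
  have "c ^ m * Q ^ tri m * \<beta> (Suc i + m) = c ^ m * Q ^ tri m * (\<beta> (i + m) + c * Q ^ (i + m) * \<beta> (Suc (i + m)))"
    using assms[of "i + m"] by simp
  also have "\<dots> = c ^ m * Q ^ tri m * \<beta> (i + m) + Q ^ i * (c ^ Suc m * Q ^ tri (Suc m) * \<beta> (i + Suc m))"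
    by (simp add: tri_Suc power_add algebra_simps)
  finally show "c ^ m * Q ^ tri m * \<beta> (Suc i + m) = c ^ m * Q ^ tri m * \<beta> (i + m) + Q ^ i * (c ^ Suc m * Q ^ tri (Suc m) * \<beta> (i + Suc m))" .
qed

lemma sys_base2:
  assumes "\<And>n. \<beta> (Suc n) = \<beta> n + c * Q ^ n * \<beta> n"
  shows "sys Q (\<lambda>m i. c ^ m * \<beta> i)"
  unfolding sys_def using assms by (simp add: algebra_simps)

lemma sys_prod_exists:
  fixes K :: nat
  assumes Q: "pos Q"
    and bs: "\<forall>r<K. sys Q (bs r)" "\<forall>r<K. \<forall>m i. pos (bs r m i)"
  shows "\<exists>V. sys Q V \<and> (\<forall>m i. pos (V m i)) \<and> (\<forall>i. V 0 i = (\<Prod>r<K. bs r 0 i))"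
  using bs(1) bs(2)
proof (induction K)
  case 0
  show ?case
    by (rule exI[of _ "\<lambda>m i. if m = 0 then 1 else 0"]) (auto simp: sys_one pos_0 pos_1)
next
  case (Suc K)
  then obtain V where V: "sys Q V" "\<And>m i. pos (V m i)" "\<And>i. V 0 i = (\<Prod>r<K. bs r 0 i)"
    by auto
  show ?case
  proof (intro exI conjI allI)
    show "sys Q (psys Q V (bs K))" using V Suc.prems by (intro sys_psys) auto
    show "pos (psys Q V (bs K) m i)" for m i using V Suc.prems Q by (intro pos_psys) auto
    show "psys Q V (bs K) 0 i = (\<Prod>r<Suc K. bs r 0 i)" for i
      by (simp add: psys_0 V(3))
  qed
qed

lemma main_identity:
  fixes t :: "nat \<Rightarrow> ser" and Q P :: ser
  assumes vt: "\<And>n. vanish n (t n)" and Qnz: "Q \<noteq> 0"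
    and V: "sys Q V" and base: "\<And>i. P * V 0 i = ssum (\<lambda>n. t n * Q ^ (i * n))"
  shows "P * V m i = ssum (\<lambda>n. t n * w Q m i n)"
proof (induction m arbitrary: i)
  case 0
  then show ?case by (simp add: base w_0)
next
  case (Suc m)
  have "Q ^ i * (P * V (Suc m) i) = P * V m (Suc i) - P * V m i"
    using V unfolding sys_def by (simp add: algebra_simps)
  also have "\<dots> = ssum (\<lambda>n. t n * w Q m (Suc i) n) - ssum (\<lambda>n. t n * w Q m i n)"
    by (simp add: Suc.IH)
  also have "\<dots> = ssum (\<lambda>n. t n * w Q m (Suc i) n - t n * w Q m i n)"
    by (simp add: ssum_diff)
  also have "\<dots> = ssum (\<lambda>n. Q ^ i * (t n * w Q (Suc m) i n))"
  proof -
    have "t n * w Q m (Suc i) n - t n * w Q m i n = Q ^ i * (t n * w Q (Suc m) i n)" for n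
      using w_rec[of Q m i n] by (simp add: algebra_simps flip: right_diff_distrib)
    thus ?thesis by simp
  qed
  also have "\<dots> = Q ^ i * ssum (\<lambda>n. t n * w Q (Suc m) i n)"
    using vt by (intro ssum_mult_left vanish_mult_right)
  finally show ?case using Qnz by simp
qed

lemma final_identity:
  fixes t :: "nat \<Rightarrow> ser" and Q P :: ser
  assumes vt: "\<And>n. vanish n (t n)" and Qnz: "Q \<noteq> 0" and Qz: "zfree Q"
    and V: "sys Q V" and base: "\<And>i. P * V 0 i = ssum (\<lambda>n. t n * Q ^ (i * n))"
  shows "qpoch Q Q m * ssum (\<lambda>n. t n * cc Q n m) = Q ^ tri m * (P * V m 0)"
proof -
  have "qpoch Q Q m * ssum (\<lambda>n. t n * cc Q n m) = ssum (\<lambda>n. qpoch Q Q m * (t n * cc Q n m))"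
    using vt by (intro ssum_mult_left[symmetric] vanish_mult_right)
  also have "\<dots> = ssum (\<lambda>n. Q ^ tri m * (t n * w Q m 0 n))"
  proof -
    have eq: "qpoch Q Q m * (t n * cc Q n m) = Q ^ tri m * (t n * w Q m 0 n)" for n
    proof -
      have "qpoch Q Q m * (t n * cc Q n m) = t n * (qpoch Q Q m * cc Q n m)"
        by (simp only: mult_ac)
      also have "\<dots> = t n * (Q ^ tri m * pp Q n m)" by (simp only: cc_pp[OF Qz])
      also have "\<dots> = Q ^ tri m * (t n * w Q m 0 n)" by (simp only: w_i0 mult_ac)
      finally show ?thesis .
    qed
    show ?thesis by (simp only: eq)
  qed
  also have "\<dots> = Q ^ tri m * ssum (\<lambda>n. t n * w Q m 0 n)"
    using vt by (intro ssum_mult_left vanish_mult_right)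
  also have "\<dots> = Q ^ tri m * (P * V m 0)"
    using main_identity[OF vt Qnz V base] by simp
  finally show ?thesis .
qed

section \<open>Euler-type identities\<close>

lemma prod_nth0:
  fixes h :: "nat \<Rightarrow> ser" and n :: nat
  shows "(\<And>j. fps_nth (h j) 0 = 0) \<Longrightarrow> fps_nth (\<Prod>j<n. 1 - h j) 0 = 1"
  by (induction n) (auto simp: fps_mult_nth_0)

lemma qpoch_nth0: "(\<And>j. fps_nth (A * Q ^ j) 0 = 0) \<Longrightarrow> fps_nth (qpoch A Q n) 0 = (1::int poly poly)"
  unfolding qpoch_def by (rule prod_nth0[of "\<lambda>j. A * Q ^ j"])

lemma qpoch_q_nth0: "fps_nth (qpoch vq vq n) 0 = 1"
  by (rule qpoch_nth0) (simp add: vq_def fps_mult_nth_0)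

lemma finv_1: "finv 1 = 1"
  by (rule finv_unique) simp_all

lemma finv_mult_cancel:
  assumes "fps_nth f 0 = 1" "fps_nth g 0 = 1"
  shows "finv (f * g) * g = finv f"
proof -
  have fg: "fps_nth (f * g) 0 = 1" using assms by (simp add: fps_mult_nth_0)
  have "f * (g * finv (f * g)) = 1" using finv_mult[OF fg] by (simp add: mult.assoc)
  from finv_unique[OF assms(1) this] show ?thesis by (simp add: mult.commute)
qed

lemma finv_qpoch_Suc: "finv (qpoch vq vq (Suc n)) * (1 - fps_X ^ Suc n) = finv (qpoch vq vq n)"
proof -
  have "qpoch vq vq (Suc n) = qpoch vq vq n * (1 - fps_X ^ Suc n)"
    by (simp add: qpoch_Suc vq_def)
  thus ?thesis using finv_mult_cancel[OF qpoch_q_nth0, of "1 - fps_X ^ Suc n" n] by simp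
qed

definition t1 :: "nat \<Rightarrow> ser" where
  "t1 n = (-1) ^ n * vy ^ n * vq ^ (n * (n + 1) div 2) * finv (qpoch vq vq n)"

lemma tri2_Suc: "Suc n * (Suc n + 1) div 2 = n * (n + 1) div 2 + Suc n"
proof -
  have "Suc n * (Suc n + 1) = n * (n + 1) + Suc n * 2" by simp
  thus ?thesis by simp
qed

lemma t1_0: "t1 0 = 1" by (simp add: t1_def qpoch_0 finv_1)

lemma t1_Suc: "t1 (Suc n) * (1 - fps_X ^ Suc n) = - vy * fps_X ^ Suc n * t1 n"
proof -
  have "t1 (Suc n) * (1 - fps_X ^ Suc n)
      = (-1) ^ Suc n * vy ^ Suc n * vq ^ (n * (n + 1) div 2 + Suc n) * (finv (qpoch vq vq (Suc n)) * (1 - fps_X ^ Suc n))"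
    unfolding t1_def tri2_Suc by (simp only: mult.assoc)
  also have "\<dots> = - vy * fps_X ^ Suc n * t1 n"
    unfolding finv_qpoch_Suc t1_def by (simp add: vq_def power_add algebra_simps)
  finally show ?thesis .
qed

lemma vanish_t1: "vanish n (t1 n)"
proof -
  have "n \<le> n * (n + 1) div 2"
  proof -
    have "n * 2 \<le> n * (n + 1)" by (cases n) auto
    thus ?thesis by linarith
  qed
  hence "vanish n (vq ^ (n * (n + 1) div 2))" unfolding vq_def by (rule vanish_X_power)
  thus ?thesis unfolding t1_def by (intro vanish_mult_right vanish_mult_left)
qed

lemma zfree_finv_qpoch: "zfree (finv (qpoch vq vq n))"
proof (induction n)
  case 0 thus ?case by (simp add: qpoch_0 finv_1 zfree_1)
next
  case (Suc n)
  have "finv (qpoch vq vq (Suc n)) = finv (qpoch vq vq n) * geom 1 (Suc n)"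
  proof -
    have e: "(1 - fps_const 1 * fps_X ^ Suc n) * geom 1 (Suc n) = 1" by (rule geom_inv) simp
    have "finv (qpoch vq vq (Suc n)) = finv (qpoch vq vq (Suc n)) * ((1 - fps_X ^ Suc n) * geom 1 (Suc n))"
      using e by simp
    also have "\<dots> = finv (qpoch vq vq n) * geom 1 (Suc n)"
      by (simp only: mult.assoc[symmetric] finv_qpoch_Suc)
    finally show ?thesis .
  qed
  thus ?case using Suc by (simp add: zfree_mult zfree_geom zf_1)
qed

lemma zfree_t1: "zfree (t1 n)"
  unfolding t1_def
  by (intro zfree_mult zfree_power zfree_uminus zfree_1 zfree_vy zfree_vq zfree_finv_qpoch)

definition G :: "nat \<Rightarrow> ser" where "G b = ssum (\<lambda>n. t1 n * fps_X ^ (b * n))"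

lemma vanish_t1X: "vanish n (t1 n * fps_X ^ (b * n))"
  by (intro vanish_mult_right vanish_t1)

lemma G_rec: "G b = (1 - vy * fps_X ^ Suc b) * G (Suc b)"
proof -
  define d where "d n = t1 n * fps_X ^ (b * n) - t1 n * fps_X ^ (Suc b * n)" for n
  have vd: "vanish n (d n)" for n unfolding d_def by (intro vanish_diff vanish_t1X)
  have "G b - G (Suc b) = ssum d" unfolding G_def d_def by (simp add: ssum_diff)
  have dS: "d (Suc n) = (- vy * fps_X ^ Suc b) * (t1 n * fps_X ^ (Suc b * n))" for n
  proof -
    have "d (Suc n) = fps_X ^ (b * Suc n) * (t1 (Suc n) * (1 - fps_X ^ Suc n))"
      unfolding d_def by (simp add: power_add algebra_simps)
    also have "\<dots> = fps_X ^ (b * Suc n) * (- vy * fps_X ^ Suc n * t1 n)" by (simp only: t1_Suc)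
    also have "\<dots> = (- vy * fps_X ^ Suc b) * (t1 n * fps_X ^ (Suc b * n))"
      by (simp add: power_add algebra_simps)
    finally show ?thesis .
  qed
  have "(\<lambda>n. d (Suc n)) sums ((- vy * fps_X ^ Suc b) * G (Suc b))"
    unfolding dS G_def by (intro sums_fps_mult_left sums_ssum vanish_t1X)
  hence "d sums ((- vy * fps_X ^ Suc b) * G (Suc b))"
    by (rule sums_shift0[rotated]) (simp add: d_def)
  moreover have "d sums ssum d" using vd by (rule sums_ssum)
  ultimately have "ssum d = (- vy * fps_X ^ Suc b) * G (Suc b)" by (rule sums_unique2[rotated])
  with \<open>G b - G (Suc b) = ssum d\<close> show ?thesis by (simp add: algebra_simps)
qed

lemma G_iter: "G 0 = qpoch (vy * vq) vq N * G N"
proof (induction N)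
  case 0 thus ?case by (simp add: qpoch_0)
next
  case (Suc N)
  thus ?case by (subst (asm) G_rec) (simp add: qpoch_Suc vq_def mult.assoc)
qed

lemma ssum_low:
  assumes "\<And>n. 0 < n \<Longrightarrow> vanish N (a n)" "j < N"
  shows "fps_nth (ssum a) j = fps_nth (a 0) j"
proof -
  have "fps_nth (ssum a) j = (\<Sum>n\<in>{0}. fps_nth (a n) j)"
    unfolding ssum_nth
    by (rule sum.mono_neutral_right) (use assms in \<open>auto simp: vanish_def\<close>)
  thus ?thesis by simp
qed

lemma G_low: "j < N \<Longrightarrow> fps_nth (G N) j = fps_nth 1 j"
  unfolding G_def
  by (subst ssum_low[of N]) (auto simp: t1_0 intro!: vanish_mult_left vanish_X_power)

lemma G_nth0: "fps_nth (G 0) 0 = 1"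
  unfolding G_def by (simp add: ssum_nth t1_0)

lemma P1_eq: "qpoch_inf (vy * vq) vq = G 0"
  unfolding qpoch_inf_def
proof (rule limI, rule tendsto_fpsI)
  fix j
  show "\<forall>\<^sub>F N in sequentially. fps_nth (qpoch (vy * vq) vq N) j = fps_nth (G 0) j"
    unfolding eventually_sequentially
  proof (intro exI allI impI)
    fix N assume N: "Suc j \<le> N"
    have "vanish N (G N - 1)" unfolding vanish_def using G_low by simp
    hence "vanish N (qpoch (vy * vq) vq N * (G N - 1))" by (rule vanish_mult_left)
    hence "fps_nth (qpoch (vy * vq) vq N * (G N - 1)) j = 0" using N by (simp add: vanish_def)
    thus "fps_nth (qpoch (vy * vq) vq N) j = fps_nth (G 0) j"
      by (subst G_iter[of N]) (simp add: algebra_simps)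
  qed
qed

definition t2 :: "nat \<Rightarrow> ser" where
  "t2 n = (-1) ^ n * vy ^ n * vq ^ n * finv (qpoch vq vq n)"

lemma t2_0: "t2 0 = 1" by (simp add: t2_def qpoch_0 finv_1)

lemma t2_Suc: "t2 (Suc n) * (1 - fps_X ^ Suc n) = - vy * fps_X * t2 n"
proof -
  have "t2 (Suc n) * (1 - fps_X ^ Suc n)
      = (-1) ^ Suc n * vy ^ Suc n * vq ^ Suc n * (finv (qpoch vq vq (Suc n)) * (1 - fps_X ^ Suc n))"
    unfolding t2_def by (simp only: mult.assoc)
  also have "\<dots> = - vy * fps_X * t2 n"
    unfolding finv_qpoch_Suc t2_def by (simp add: vq_def algebra_simps)
  finally show ?thesis .
qed

lemma vanish_t2: "vanish n (t2 n)"
proof -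
  have "vanish n (vq ^ n)" unfolding vq_def by (rule vanish_X_power) simp
  thus ?thesis unfolding t2_def by (intro vanish_mult_right vanish_mult_left)
qed

lemma zfree_t2: "zfree (t2 n)"
  unfolding t2_def
  by (intro zfree_mult zfree_power zfree_uminus zfree_1 zfree_vy zfree_vq zfree_finv_qpoch)

definition H :: "nat \<Rightarrow> ser" where "H b = ssum (\<lambda>n. t2 n * fps_X ^ (b * n))"

lemma vanish_t2X: "vanish n (t2 n * fps_X ^ (b * n))"
  by (intro vanish_mult_right vanish_t2)

lemma H_rec: "H (Suc b) = (1 + vy * fps_X ^ Suc b) * H b"
proof -
  define d where "d n = t2 n * fps_X ^ (b * n) - t2 n * fps_X ^ (Suc b * n)" for n
  have vd: "vanish n (d n)" for n unfolding d_def by (intro vanish_diff vanish_t2X)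
  have "H b - H (Suc b) = ssum d" unfolding H_def d_def by (simp add: ssum_diff)
  have dS: "d (Suc n) = (- vy * fps_X ^ Suc b) * (t2 n * fps_X ^ (b * n))" for n
  proof -
    have "d (Suc n) = fps_X ^ (b * Suc n) * (t2 (Suc n) * (1 - fps_X ^ Suc n))"
      unfolding d_def by (simp add: power_add algebra_simps)
    also have "\<dots> = fps_X ^ (b * Suc n) * (- vy * fps_X * t2 n)" by (simp only: t2_Suc)
    also have "\<dots> = (- vy * fps_X ^ Suc b) * (t2 n * fps_X ^ (b * n))"
      by (simp add: power_add algebra_simps)
    finally show ?thesis .
  qed
  have "(\<lambda>n. d (Suc n)) sums ((- vy * fps_X ^ Suc b) * H b)"
    unfolding dS H_def by (intro sums_fps_mult_left sums_ssum vanish_t2X)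
  hence "d sums ((- vy * fps_X ^ Suc b) * H b)"
    by (rule sums_shift0[rotated]) (simp add: d_def)
  moreover have "d sums ssum d" using vd by (rule sums_ssum)
  ultimately have "ssum d = (- vy * fps_X ^ Suc b) * H b" by (rule sums_unique2[rotated])
  with \<open>H b - H (Suc b) = ssum d\<close> show ?thesis by (simp add: algebra_simps)
qed

lemma H_iter: "qpoch (- (vy * vq)) vq N * H 0 = H N"
proof (induction N)
  case 0 thus ?case by (simp add: qpoch_0)
next
  case (Suc N)
  have "qpoch (- (vy * vq)) vq (Suc N) * H 0 = (1 + vy * fps_X ^ Suc N) * (qpoch (- (vy * vq)) vq N * H 0)"
    by (simp add: qpoch_Suc vq_def algebra_simps)
  also have "\<dots> = H (Suc N)" by (simp add: Suc H_rec)
  finally show ?case .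
qed

lemma H_low: "j < N \<Longrightarrow> fps_nth (H N) j = fps_nth 1 j"
  unfolding H_def
  by (subst ssum_low[of N]) (auto simp: t2_0 intro!: vanish_mult_left vanish_X_power)

lemma H_nth0: "fps_nth (H 0) 0 = 1"
  unfolding H_def by (simp add: ssum_nth t2_0)

lemma P2_eq: "qpoch_inf (- (vy * vq)) vq = finv (H 0)"
  unfolding qpoch_inf_def
proof (rule limI, rule tendsto_fpsI)
  fix j
  show "\<forall>\<^sub>F N in sequentially. fps_nth (qpoch (- (vy * vq)) vq N) j = fps_nth (finv (H 0)) j"
    unfolding eventually_sequentially
  proof (intro exI allI impI)
    fix N assume N: "Suc j \<le> N"
    have "vanish N (H N - 1)" unfolding vanish_def using H_low by simp
    hence "vanish N ((H N - 1) * finv (H 0))" by (rule vanish_mult_right)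
    hence z: "fps_nth ((H N - 1) * finv (H 0)) j = 0" using N by (simp add: vanish_def)
    have "qpoch (- (vy * vq)) vq N = qpoch (- (vy * vq)) vq N * (H 0 * finv (H 0))"
      using finv_mult[OF H_nth0] by simp
    also have "\<dots> = H N * finv (H 0)" by (simp only: mult.assoc[symmetric] H_iter)
    also have "\<dots> = finv (H 0) + (H N - 1) * finv (H 0)" by (simp add: algebra_simps)
    finally show "fps_nth (qpoch (- (vy * vq)) vq N) j = fps_nth (finv (H 0)) j"
      using z by simp
  qed
qed

lemma prod_split_add: "(\<Prod>j<a + K. h j) = (\<Prod>j<a. h j) * (\<Prod>r<K. h (a + r))"
  for h :: "nat \<Rightarrow> ser"
  by (induction K) (simp_all add: mult.assoc)

lemma prod_reindex_k:
  fixes f :: "nat \<Rightarrow> ser"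
  shows "(\<Prod>j<k * i. f (Suc j)) = (\<Prod>r<k. \<Prod>s<i. f (Suc r + k * s))"
proof (induction i)
  case 0 thus ?case by simp
next
  case (Suc i)
  have "(\<Prod>j<k * Suc i. f (Suc j)) = (\<Prod>j<k * i. f (Suc j)) * (\<Prod>r<k. f (Suc (k * i + r)))"
    using prod_split_add[of "\<lambda>j. f (Suc j)" "k * i" k] by (simp add: algebra_simps)
  also have "\<dots> = (\<Prod>r<k. \<Prod>s<i. f (Suc r + k * s)) * (\<Prod>r<k. f (Suc r + k * i))"
    using Suc by (simp add: algebra_simps)
  also have "\<dots> = (\<Prod>r<k. \<Prod>s<Suc i. f (Suc r + k * s))"
    by (simp add: prod.distrib)
  finally show ?case .
qed

lemma coeff_from_pos: "pos (zc m F) \<Longrightarrow> 0 \<le> coeff_yzq F l m n"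
  unfolding pos_def pnn2_def pnn_def coeff_yzq_def
  by (drule spec[of _ n], drule spec[of _ l], drule spec[of _ 0]) (simp add: coeff_ZP)

lemma finv_qpochQ:
  assumes k: "0 < k"
  shows "qpoch (fps_X ^ k) (fps_X ^ k) m * (\<Prod>j<m. geom 1 (k * Suc j)) = 1"
proof -
  have "qpoch (fps_X ^ k) (fps_X ^ k) m * (\<Prod>j<m. geom 1 (k * Suc j))
      = (\<Prod>j<m. (1 - fps_const 1 * fps_X ^ (k * Suc j)) * geom 1 (k * Suc j))"
    unfolding qpoch_def prod.distrib[symmetric]
    by (intro prod.cong refl) (simp add: power_mult[symmetric] power_add[symmetric] algebra_simps)
  also have "\<dots> = 1" using k by (intro prod.neutral ballI geom_inv) simp
  finally show ?thesis .
qed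

lemma assembly:
  fixes t :: "nat \<Rightarrow> ser" and P F :: ser
  assumes k: "0 < k" and vt: "\<And>n. vanish n (t n)" and zt: "\<And>n. zfree (t n)"
    and zP: "zfree P" and P0: "fps_nth P 0 = 1"
    and V: "sys (fps_X ^ k) V" and posV: "\<And>m i. pos (V m i)"
    and base: "\<And>i. P * V 0 i = ssum (\<lambda>n. t n * (fps_X ^ k) ^ (i * n))"
    and S: "P * F = ssum (\<lambda>n. t n * qpoch vz (fps_X ^ k) n)"
  shows "pos (zc m F)"
proof -
  define Q :: ser where "Q = fps_X ^ k"
  have Qnz: "Q \<noteq> 0" unfolding Q_def by (simp add: fps_X_neq_zero)
  have Qz: "zfree Q" unfolding Q_def by (intro zfree_power zfree_X)
  have "P * zc m F = zc m (P * F)" by (simp add: zc_mult zP)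
  also have "\<dots> = ssum (\<lambda>n. zc m (t n * qpoch vz Q n))" unfolding S Q_def by (simp add: zc_ssum)
  also have "\<dots> = ssum (\<lambda>n. t n * cc Q n m)" by (simp add: zc_mult zt cc_def)
  finally have e1: "P * zc m F = ssum (\<lambda>n. t n * cc Q n m)" .
  have fi: "qpoch Q Q m * ssum (\<lambda>n. t n * cc Q n m) = Q ^ tri m * (P * V m 0)"
    by (rule final_identity[OF vt Qnz Qz]) (use V base in \<open>simp_all add: Q_def\<close>)
  have "P * (qpoch Q Q m * zc m F) = qpoch Q Q m * (P * zc m F)" by (simp only: mult_ac)
  also have "\<dots> = Q ^ tri m * (P * V m 0)" by (simp only: e1 fi)
  also have "\<dots> = P * (Q ^ tri m * V m 0)" by (simp only: mult_ac)
  finally have "P * (qpoch Q Q m * zc m F) = P * (Q ^ tri m * V m 0)" .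
  moreover have "P \<noteq> 0" using P0 by auto
  ultimately have e2: "qpoch Q Q m * zc m F = Q ^ tri m * V m 0" by simp
  define IQ where "IQ = (\<Prod>j<m. geom 1 (k * Suc j))"
  have inv: "qpoch Q Q m * IQ = 1" unfolding IQ_def Q_def by (rule finv_qpochQ[OF k])
  have "zc m F = IQ * (qpoch Q Q m * zc m F)" using inv by (simp add: algebra_simps)
  also have "\<dots> = IQ * (Q ^ tri m * V m 0)" by (simp only: e2)
  finally have "zc m F = IQ * (Q ^ tri m * V m 0)" .
  moreover have "pos IQ" unfolding IQ_def by (intro pos_prod pos_geom pnn2_1)
  moreover have "pos Q" unfolding Q_def by (intro pos_power pos_X)
  ultimately show ?thesis using posV by (auto intro!: pos_mult pos_power)
qed

lemma pos_vy: "pos vy" unfolding vy_def by (intro pos_const pnn2_y)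

lemma cQ: "vy * fps_X ^ Suc r * (fps_X ^ k) ^ n = fps_const [:0, 1:] * fps_X ^ (Suc r + k * n)"
  by (simp add: vy_def power_add power_mult mult.assoc)

lemma series1_pos:
  assumes k: "0 < k"
  shows "pos (zc m (series1 k))"
proof -
  define Q :: ser where "Q = fps_X ^ k"
  define c :: "nat \<Rightarrow> ser" where "c r = vy * fps_X ^ Suc r" for r
  define \<beta> :: "nat \<Rightarrow> nat \<Rightarrow> ser" where "\<beta> r n = (\<Prod>s<n. geom [:0, 1:] (Suc r + k * s))" for r n
  define bs where "bs r m i = c r ^ m * Q ^ tri m * \<beta> r (i + m)" for r m i
  have \<beta>rec: "\<beta> r (Suc n) = \<beta> r n + c r * Q ^ n * \<beta> r (Suc n)" for r n
  proof -
    have gi: "(1 - fps_const [:0, 1:] * fps_X ^ (Suc r + k * n)) * geom [:0, 1:] (Suc r + k * n) = 1"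
      by (rule geom_inv) simp
    have "\<beta> r n = \<beta> r n * ((1 - fps_const [:0, 1:] * fps_X ^ (Suc r + k * n)) * geom [:0, 1:] (Suc r + k * n))"
      using gi by simp
    also have "\<dots> = \<beta> r (Suc n) - c r * Q ^ n * \<beta> r (Suc n)"
      unfolding \<beta>_def c_def Q_def cQ by (simp add: algebra_simps)
    finally show ?thesis by simp
  qed
  have sysb: "\<forall>r<k. sys Q (bs r)"
    unfolding bs_def using \<beta>rec by (intro allI impI sys_base1) auto
  have posb: "\<forall>r<k. \<forall>m i. pos (bs r m i)"
    unfolding bs_def c_def \<beta>_def Q_def
    by (intro allI impI pos_mult pos_power pos_vy pos_X pos_prod pos_geom pnn2_y)
  obtain V where V: "sys Q V" "\<And>m i. pos (V m i)" "\<And>i. V 0 i = (\<Prod>r<k. bs r 0 i)"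
    using sys_prod_exists[OF _ sysb posb] Q_def pos_power pos_X by blast
  have V0: "V 0 i = (\<Prod>r<k. \<beta> r i)" for i by (simp add: V(3) bs_def tri_0)
  have qinv: "qpoch (vy * vq) vq (k * i) * V 0 i = 1" for i
  proof -
    define f :: "nat \<Rightarrow> ser" where "f e = 1 - fps_const [:0, 1:] * fps_X ^ e" for e
    have "qpoch (vy * vq) vq (k * i) = (\<Prod>j<k * i. f (Suc j))"
      unfolding qpoch_def f_def by (simp add: vy_def vq_def mult.assoc)
    also have "\<dots> = (\<Prod>r<k. \<Prod>s<i. f (Suc r + k * s))" by (rule prod_reindex_k)
    finally have "qpoch (vy * vq) vq (k * i) * V 0 i
        = (\<Prod>r<k. \<Prod>s<i. f (Suc r + k * s) * geom [:0, 1:] (Suc r + k * s))"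
      unfolding V0 \<beta>_def by (simp add: prod.distrib)
    also have "\<dots> = 1" unfolding f_def by (intro prod.neutral ballI geom_inv) simp
    finally show ?thesis .
  qed
  have base: "G 0 * V 0 i = ssum (\<lambda>n. t1 n * (fps_X ^ k) ^ (i * n))" for i
  proof -
    have "G 0 * V 0 i = G (k * i) * (qpoch (vy * vq) vq (k * i) * V 0 i)"
      by (subst G_iter[of "k * i"]) (simp add: mult_ac)
    also have "\<dots> = G (k * i)" by (simp add: qinv)
    finally show ?thesis by (simp add: G_def power_mult mult.assoc)
  qed
  have zG: "zfree (G 0)" unfolding G_def
    by (intro zfree_ssum zfree_mult zfree_t1 zfree_power zfree_X)
  have fr: "(\<lambda>n. (-1) ^ n * vy ^ n * vq ^ (n * (n + 1) div 2) * qpoch vz (vq ^ k) n * finv (qpoch vq vq n))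
      = (\<lambda>n. t1 n * qpoch vz (fps_X ^ k) n)"
    by (rule ext) (simp add: t1_def vq_def mult_ac)
  have vs: "vanish n (t1 n * qpoch vz (fps_X ^ k) n)" for n by (intro vanish_mult_right vanish_t1)
  have S: "G 0 * series1 k = ssum (\<lambda>n. t1 n * qpoch vz (fps_X ^ k) n)"
    unfolding series1_def P1_eq fr suminf_ssum[OF vs]
    using finv_mult[OF G_nth0] by (simp add: mult.assoc[symmetric])
  show ?thesis
  proof -
    have Vs: "sys (fps_X ^ k) V" using V(1) Q_def by simp
    show ?thesis
      by (rule assembly[where t=t1 and P="G 0" and V=V, OF k vanish_t1 zfree_t1 zG G_nth0 Vs V(2) base S])
  qed
qed

lemma series2_pos:
  assumes k: "0 < k"
  shows "pos (zc m (series2 k))"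
proof -
  define Q :: ser where "Q = fps_X ^ k"
  define c :: "nat \<Rightarrow> ser" where "c r = vy * fps_X ^ Suc r" for r
  define \<beta> :: "nat \<Rightarrow> nat \<Rightarrow> ser" where "\<beta> r n = (\<Prod>s<n. 1 + vy * fps_X ^ (Suc r + k * s))" for r n
  define bs where "bs r m i = c r ^ m * \<beta> r i" for r m i
  have \<beta>rec: "\<beta> r (Suc n) = \<beta> r n + c r * Q ^ n * \<beta> r n" for r n
  proof -
    have e: "c r * Q ^ n = vy * fps_X ^ (Suc r + k * n)"
      unfolding c_def Q_def by (simp add: power_add power_mult mult.assoc)
    have "\<beta> r (Suc n) = \<beta> r n * (1 + vy * fps_X ^ (Suc r + k * n))" by (simp add: \<beta>_def)
    thus ?thesis by (simp only: e) (simp add: algebra_simps)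
  qed
  have sysb: "\<forall>r<k. sys Q (bs r)"
    unfolding bs_def using \<beta>rec by (intro allI impI sys_base2) auto
  have posb: "\<forall>r<k. \<forall>m i. pos (bs r m i)"
    unfolding bs_def c_def \<beta>_def
    by (intro allI impI pos_mult pos_power pos_vy pos_X pos_prod pos_add pos_1)
  obtain V where V: "sys Q V" "\<And>m i. pos (V m i)" "\<And>i. V 0 i = (\<Prod>r<k. bs r 0 i)"
    using sys_prod_exists[OF _ sysb posb] Q_def pos_power pos_X by blast
  have V0: "V 0 i = qpoch (- (vy * vq)) vq (k * i)" for i
  proof -
    define f :: "nat \<Rightarrow> ser" where "f e = 1 + vy * fps_X ^ e" for e
    have "qpoch (- (vy * vq)) vq (k * i) = (\<Prod>j<k * i. f (Suc j))"
      unfolding qpoch_def f_def by (simp add: vq_def mult.assoc)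
    also have "\<dots> = (\<Prod>r<k. \<Prod>s<i. f (Suc r + k * s))" by (rule prod_reindex_k)
    also have "\<dots> = V 0 i" by (simp add: V(3) bs_def \<beta>_def f_def)
    finally show ?thesis by simp
  qed
  have base: "H 0 * V 0 i = ssum (\<lambda>n. t2 n * (fps_X ^ k) ^ (i * n))" for i
  proof -
    have "H 0 * V 0 i = H (k * i)" unfolding V0 using H_iter[of "k * i"] by (simp add: mult.commute)
    thus ?thesis by (simp add: H_def power_mult mult.assoc)
  qed
  have zH: "zfree (H 0)" unfolding H_def
    by (intro zfree_ssum zfree_mult zfree_t2 zfree_power zfree_X)
  have fr: "(\<lambda>n. (-1) ^ n * vy ^ n * vq ^ n * qpoch vz (vq ^ k) n * finv (qpoch vq vq n))
      = (\<lambda>n. t2 n * qpoch vz (fps_X ^ k) n)"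
    by (rule ext) (simp add: t2_def vq_def mult_ac)
  have vs: "vanish n (t2 n * qpoch vz (fps_X ^ k) n)" for n by (intro vanish_mult_right vanish_t2)
  have S: "H 0 * series2 k = ssum (\<lambda>n. t2 n * qpoch vz (fps_X ^ k) n)"
    unfolding series2_def P2_eq fr suminf_ssum[OF vs]
    using finv_mult[OF H_nth0] by (simp add: mult.assoc[symmetric])
  show ?thesis
  proof -
    have Vs: "sys (fps_X ^ k) V" using V(1) Q_def by simp
    show ?thesis
      by (rule assembly[where t=t2 and P="H 0" and V=V, OF k vanish_t2 zfree_t2 zH H_nth0 Vs V(2) base S])
  qed
qed

theorem corollary1p8:
  fixes k :: nat
  assumes "k \<ge> 1"
  shows "\<forall>l m n. coeff_yzq (series1 k) l m n \<ge> 0 \<and> coeff_yzq (series2 k) l m n \<ge> 0"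
  using assms by (auto intro!: coeff_from_pos series1_pos series2_pos)

end
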